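(* There is a sufficiently small $\epsilon>0$ such that, for each combinatorial line $L$ of $\mathrm{HJ}(d,n)$, the affine function $g^\epsilon_L$ vanishes on $\nu(P^\epsilon_L)$ and is positive on $\nu(P^\epsilon\setminus P^\epsilon_L)$.
   Context: Combinatorial lines and $\mathrm{HJ}(d,n)$: for $\tau\in([d]\cup\{*\})^n\setminus[d]^n$ and $k\in\mathbb{R}$, $\sigma(\tau,k)$ is $\tau$ with every $*$ replaced by $k$; $L_\tau=\{\sigma(\tau,k):k\in[d]\}$, and $\mathrm{HJ}(d,n)$ is the hypergraph on $[d]^n$ of all combinatorial lines. Vectors $v_1,\dots,v_n\in\mathbb{R}^2$ have positive $x$-components; $p_\sigma=\sum_i\sigma_iv_i$; $P=\{p_\sigma:\sigma\in[d]^n\}$ consists of distinct points; for a line $L$, $P_L=\{p_\sigma:\sigma\in L\}$ spans the line $S_L: y=a_Lx+b_L$, and it is assumed that $S_L\cap P=P_L$ for every line $L$. $\nu(x,y)=(x^2,xy,y^2,x,y)$. For $\epsilon>0$, $\phi_\epsilon(x,y)=(x,y+\sqrt{\epsilon x})$, $P^\epsilon=\phi_\epsilon(P)$, $P^\epsilon_L=\phi_\epsilon(P_L)$, $f^\epsilon_L(x,y)=(y-a_Lx-b_L)^2-\epsilon x$, and $g^\epsilon_L:\mathbb{R}^5\to\mathbb{R}$ is the affine function with $g^\epsilon_L(x^2,xy,y^2,x,y)=f^\epsilon_L(x,y)$. *)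

theory Defs
  imports "HOL-Analysis.Analysis"
begin

definition cube :: "nat \<Rightarrow> nat \<Rightarrow> (nat \<Rightarrow> nat) set" where
  "cube d n = {0..<n} \<rightarrow>\<^sub>E {1..d}"

text \<open>Templates tau in ([d] \<union> {*})^n minus [d]^n; the wildcard * is None.\<close>
definition is_template :: "nat \<Rightarrow> nat \<Rightarrow> (nat \<Rightarrow> nat option) \<Rightarrow> bool" where
  "is_template d n \<tau> \<longleftrightarrow>
     \<tau> \<in> {0..<n} \<rightarrow>\<^sub>E insert None (Some ` {1..d}) \<and> (\<exists>i<n. \<tau> i = None)"

definition subst_star :: "nat \<Rightarrow> (nat \<Rightarrow> nat option) \<Rightarrow> nat \<Rightarrow> (nat \<Rightarrow> nat)" where
  "subst_star n \<tau> k = restrict (\<lambda>i. case \<tau> i of None \<Rightarrow> k | Some j \<Rightarrow> j) {0..<n}"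

definition comb_line :: "nat \<Rightarrow> nat \<Rightarrow> (nat \<Rightarrow> nat option) \<Rightarrow> (nat \<Rightarrow> nat) set" where
  "comb_line d n \<tau> = {subst_star n \<tau> k | k. k \<in> {1..d}}"

definition HJ :: "nat \<Rightarrow> nat \<Rightarrow> (nat \<Rightarrow> nat) set set" where
  "HJ d n = {comb_line d n \<tau> | \<tau>. is_template d n \<tau>}"

definition pt :: "(nat \<Rightarrow> real \<times> real) \<Rightarrow> nat \<Rightarrow> (nat \<Rightarrow> nat) \<Rightarrow> real \<times> real" where
  "pt v n \<sigma> = (\<Sum>i<n. real (\<sigma> i) *\<^sub>R v i)"

definition nu :: "real \<times> real \<Rightarrow> real \<times> real \<times> real \<times> real \<times> real" where
  "nu q = (fst q ^ 2, fst q * snd q, snd q ^ 2, fst q, snd q)"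

definition phi :: "real \<Rightarrow> real \<times> real \<Rightarrow> real \<times> real" where
  "phi \<epsilon> q = (fst q, snd q + sqrt (\<epsilon> * fst q))"

definition fL :: "real \<Rightarrow> real \<Rightarrow> real \<Rightarrow> real \<times> real \<Rightarrow> real" where
  "fL a b \<epsilon> q = (snd q - a * fst q - b) ^ 2 - \<epsilon> * fst q"

text \<open>The affine function g on R^5 with g(nu(x,y)) = f(x,y), written out explicitly.\<close>
definition gL :: "real \<Rightarrow> real \<Rightarrow> real \<Rightarrow> real \<times> real \<times> real \<times> real \<times> real \<Rightarrow> real" where
  "gL a b \<epsilon> z = (case z of (z1, z2, z3, z4, z5) \<Rightarrow>
      a^2 * z1 - 2 * a * z2 + z3 + (2 * a * b - \<epsilon>) * z4 - 2 * b * z5 + b^2)"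

lemma gL_nu: "gL a b \<epsilon> (nu q) = fL a b \<epsilon> q"
  by (cases q) (simp add: gL_def nu_def fL_def power2_eq_square algebra_simps)

end

theory Submission
  imports Defs
begin

lemma subst_in_cube:
  assumes "is_template d n \<tau>" "k \<in> {1..d}"
  shows "subst_star n \<tau> k \<in> cube d n"
  using assms unfolding is_template_def subst_star_def cube_def
  by (auto simp: PiE_iff split: option.splits)

lemma HJ_sub: "HJ d n \<subseteq> Pow (cube d n)"
  unfolding HJ_def comb_line_def using subst_in_cube by blast

lemma fst_pt_nonneg:
  assumes "\<forall>i<n. fst (v i) > 0"
  shows "fst (pt v n \<sigma>) \<ge> 0"
proof -
  have "fst (pt v n \<sigma>) = (\<Sum>i<n. real (\<sigma> i) * fst (v i))"
    unfolding pt_def by (simp add: fst_sum)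
  also have "\<dots> \<ge> 0" using assms by (intro sum_nonneg) auto
  finally show ?thesis .
qed

lemma key_alg:
  fixes dd s :: real
  assumes "dd \<noteq> 0" "s \<ge> 0" "2 * s < \<bar>dd\<bar>"
  shows "(dd + s)^2 - s^2 > 0"
proof -
  have e: "(dd + s)^2 - s^2 = dd * (dd + 2 * s)" by (simp add: power2_eq_square algebra_simps)
  show ?thesis
  proof (cases "dd > 0")
    case True
    then have "dd + 2 * s > 0" using assms by linarith
    then show ?thesis unfolding e using True by simp
  next
    case False
    then have "dd < 0" "dd + 2 * s < 0" using assms by auto
    then show ?thesis unfolding e by (rule mult_neg_neg)
  qed
qed

theorem lemma2p6:
  fixes d n :: nat and v :: "nat \<Rightarrow> real \<times> real"
    and a b :: "(nat \<Rightarrow> nat) set \<Rightarrow> real"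
  assumes pos: "\<forall>i<n. fst (v i) > 0"
    and distinct: "inj_on (pt v n) (cube d n)"
    and lines: "\<forall>L\<in>HJ d n.
        {q \<in> pt v n ` cube d n. snd q = a L * fst q + b L} = pt v n ` L"
  shows "\<exists>\<epsilon>>0. \<forall>L\<in>HJ d n.
           (\<forall>q\<in>phi \<epsilon> ` pt v n ` L. gL (a L) (b L) \<epsilon> (nu q) = 0) \<and>
           (\<forall>q\<in>phi \<epsilon> ` pt v n ` cube d n - phi \<epsilon> ` pt v n ` L.
               gL (a L) (b L) \<epsilon> (nu q) > 0)"
proof -
  define P where "P = pt v n ` cube d n"
  have finC: "finite (cube d n)" unfolding cube_def by (intro finite_PiE) auto
  have finP: "finite P" unfolding P_def using finC by simp
  have finHJ: "finite (HJ d n)" using HJ_sub finC by (metis finite_Pow_iff finite_subset)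
  define S where "S = {(L,p). L \<in> HJ d n \<and> p \<in> P \<and> snd p \<noteq> a L * fst p + b L}"
  have finS: "finite S"
    by (rule finite_subset[of _ "HJ d n \<times> P"]) (use finHJ finP S_def in auto)
  define D where "D = (\<lambda>(L,p). \<bar>snd p - a L * fst p - b L\<bar>) ` S"
  define m where "m = Min (insert 1 D)"
  have finD: "finite D" unfolding D_def using finS by simp
  have Dpos: "\<forall>x\<in>insert 1 D. x > 0" unfolding D_def S_def by auto
  have m0: "m > 0" unfolding m_def using finD Dpos by (subst Min_gr_iff) auto
  have mle: "m \<le> \<bar>snd p - a L * fst p - b L\<bar>" if "(L,p) \<in> S" for L p
    unfolding m_def using finD that by (intro Min_le) (auto simp: D_def)
  define X where "X = Max (insert 1 (fst ` P))"
  have X0: "X > 0" unfolding X_def using finP by (metis Max_ge finite_imageI finite_insert insertI1 less_le_trans zero_less_one)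
  have Xge: "fst p \<le> X" if "p \<in> P" for p
    unfolding X_def using finP that by (intro Max_ge) auto
  define \<epsilon> where "\<epsilon> = m^2 / (8 * X)"
  have e0: "\<epsilon> > 0" unfolding \<epsilon>_def using m0 X0 by simp
  have fnn: "fst p \<ge> 0" if "p \<in> pt v n ` A" for p A
    using that fst_pt_nonneg[OF pos] by auto
  have g_eq: "gL (a L) (b L) \<epsilon> (nu (phi \<epsilon> p)) =
      (snd p - a L * fst p - b L + sqrt (\<epsilon> * fst p))^2 - (sqrt (\<epsilon> * fst p))^2"
    if "fst p \<ge> 0" for p L
    using that e0 by (simp add: gL_nu fL_def phi_def algebra_simps)
  show ?thesis
  proof (intro exI[of _ \<epsilon>] conjI e0 ballI)
    fix L q assume L: "L \<in> HJ d n" and q: "q \<in> phi \<epsilon> ` pt v n ` L"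
    then obtain p where p: "p \<in> pt v n ` L" "q = phi \<epsilon> p" by auto
    have "p \<in> {q \<in> pt v n ` cube d n. snd q = a L * fst q + b L}"
      using lines L p by blast
    then have "snd p - a L * fst p - b L = 0" by simp
    then show "gL (a L) (b L) \<epsilon> (nu q) = 0" using g_eq[OF fnn[OF p(1)]] p by simp
  next
    fix L q assume L: "L \<in> HJ d n" and q: "q \<in> phi \<epsilon> ` pt v n ` cube d n - phi \<epsilon> ` pt v n ` L"
    then obtain p where p: "p \<in> P" "q = phi \<epsilon> p" "p \<notin> pt v n ` L" unfolding P_def by auto
    have nl: "snd p \<noteq> a L * fst p + b L" using lines L p unfolding P_def by blast
    have SL: "(L,p) \<in> S" unfolding S_def using L p nl by auto
    have fp: "fst p \<ge> 0" using p(1) fnn unfolding P_def by blast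
    define s where "s = sqrt (\<epsilon> * fst p)"
    have s0: "s \<ge> 0" unfolding s_def using e0 fp by simp
    have "s^2 = \<epsilon> * fst p" unfolding s_def using e0 fp by simp
    also have "\<dots> \<le> \<epsilon> * X" using Xge[OF p(1)] e0 by simp
    also have "\<dots> = m^2 / 8" unfolding \<epsilon>_def using X0 by simp
    also have "\<dots> < (m/2)^2" using m0 by (simp add: power2_eq_square)
    finally have "s^2 < (m/2)^2" .
    moreover have "0 \<le> m/2" using m0 by simp
    ultimately have "s < m/2" by (rule power2_less_imp_less)
    then have "2 * s < \<bar>snd p - a L * fst p - b L\<bar>" using mle[OF SL] by simp
    moreover have "snd p - a L * fst p - b L \<noteq> 0" using nl by simp
    ultimately have "(snd p - a L * fst p - b L + s)^2 - s^2 > 0"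
      using key_alg s0 by blast
    then show "gL (a L) (b L) \<epsilon> (nu q) > 0" using g_eq[OF fp] p s_def by simp
  qed
qed

end
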